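(* Let $f\in\mathbb R[x_1,\dots,x_n]$ be a circuit polynomial $f(x)=\sum_{j=0}^r f_{\alpha(j)}x^{\alpha(j)}+f_{\alpha^\star}x^{\alpha^\star}$ with $r\le n$ and barycentric coordinates $\lambda_0,\dots,\lambda_r$ of $\alpha^\star$, and set $\Theta=\prod_{j=0}^r(f_{\alpha(j)}/\lambda_j)^{\lambda_j}$. Then $f$ is coercive on $\mathbb R^n$ if and only if one of the following holds: (a) $r=n$ and $f$ satisfies (C1), (C2), (C3); (b) $r=n-1$, $f$ satisfies (C1), (C2), (C3), and moreover $f_{\alpha^\star}>-\Theta$ if $\alpha^\star\in 2\mathbb N_0^n$, while $|f_{\alpha^\star}|<\Theta$ if $\alpha^\star\notin 2\mathbb N_0^n$.
   Context: A polynomial is coercive on $\mathbb R^n$ if $f(x)\to+\infty$ as $\|x\|\to+\infty$. A circuit polynomial is $f(x)=\sum_{j=0}^r f_{\alpha(j)}x^{\alpha(j)}+f_{\alpha^\star}x^{\alpha^\star}$ (with $f_{\alpha^\star}\ne 0$ and $\alpha^\star\in\mathbb N_0^n$) such that: $r\le n$; $\alpha(j)\in 2\mathbb N_0^n$ and $f_{\alpha(j)}>0$ for all $j$; the vertex set of the Newton polytope $\mathrm{conv}(A(f))$ is exactly $\{\alpha(0),\dots,\alpha(r)\}$ and these points are affinely independent; and $\alpha^\star=\sum_{j=0}^r\lambda_j\alpha(j)$ uniquely with all $\lambda_j>0$, $\sum_j\lambda_j=1$. Here $A(f)$ is the set of exponents with nonzero coefficient. The Newton polytope at infinity is $\mathrm{New}_\infty(f)=\mathrm{conv}(A(f)\cup\{0\})$,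 $V_0(f)$ its vertex set and $V(f)=V_0(f)\setminus\{0\}$. Conditions: (C1) $V(f)\subset 2\mathbb N_0^n$; (C2) $f_\alpha>0$ for all $\alpha\in V(f)$; (C3) for every $i\in\{1,\dots,n\}$, $V(f)$ contains a vector $2k_ie_i$ with $k_i\in\mathbb N$ ($e_i$ standard unit vectors). *)

theory Defs
  imports "HOL-Analysis.Analysis"
begin

text \<open>A real polynomial in the variables indexed by the finite type 'n is given by its
  coefficient function on exponent vectors ('n => nat), assumed finitely supported.\<close>

definition supp_poly :: "(('n::finite \<Rightarrow> nat) \<Rightarrow> real) \<Rightarrow> ('n \<Rightarrow> nat) set" where
  "supp_poly c = {a. c a \<noteq> 0}"

definition monom :: "real ^ 'n::finite \<Rightarrow> ('n \<Rightarrow> nat) \<Rightarrow> real" where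
  "monom x a = (\<Prod>i\<in>UNIV. (x $ i) ^ (a i))"

definition peval :: "(('n::finite \<Rightarrow> nat) \<Rightarrow> real) \<Rightarrow> real ^ 'n \<Rightarrow> real" where
  "peval c x = (\<Sum>a\<in>supp_poly c. c a * monom x a)"

definition emb :: "('n::finite \<Rightarrow> nat) \<Rightarrow> real ^ 'n" where
  "emb a = (\<chi> i. real (a i))"

definition even_exp :: "('n::finite \<Rightarrow> nat) \<Rightarrow> bool" where
  "even_exp a \<longleftrightarrow> (\<forall>i. even (a i))"

definition coercive :: "(real ^ 'n::finite \<Rightarrow> real) \<Rightarrow> bool" where
  "coercive f \<longleftrightarrow> filterlim f at_top at_infinity"

definition V0 :: "(('n::finite \<Rightarrow> nat) \<Rightarrow> real) \<Rightarrow> ('n \<Rightarrow> nat) set" where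
  "V0 c = {a \<in> supp_poly c \<union> {\<lambda>_. 0}.
            emb a extreme_point_of convex hull (emb ` (supp_poly c \<union> {\<lambda>_. 0}))}"

definition Vf :: "(('n::finite \<Rightarrow> nat) \<Rightarrow> real) \<Rightarrow> ('n \<Rightarrow> nat) set" where
  "Vf c = V0 c - {\<lambda>_. 0}"

definition C1 :: "(('n::finite \<Rightarrow> nat) \<Rightarrow> real) \<Rightarrow> bool" where
  "C1 c \<longleftrightarrow> (\<forall>a\<in>Vf c. even_exp a)"

definition C2 :: "(('n::finite \<Rightarrow> nat) \<Rightarrow> real) \<Rightarrow> bool" where
  "C2 c \<longleftrightarrow> (\<forall>a\<in>Vf c. c a > 0)"

definition C3 :: "(('n::finite \<Rightarrow> nat) \<Rightarrow> real) \<Rightarrow> bool" where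
  "C3 c \<longleftrightarrow> (\<forall>i. \<exists>k::nat. k \<ge> 1 \<and> (\<lambda>j. if j = i then 2 * k else 0) \<in> Vf c)"

end

theory Submission
  imports Defs
begin


lemma wamgm:
  fixes a y :: "'a \<Rightarrow> real"
  assumes "finite S" "S \<noteq> {}" "\<And>i. i \<in> S \<Longrightarrow> a i > 0" "sum a S = 1"
    "\<And>i. i \<in> S \<Longrightarrow> y i \<ge> 0"
  shows "(\<Prod>i\<in>S. y i powr a i) \<le> (\<Sum>i\<in>S. a i * y i)"
proof (cases "\<exists>i\<in>S. y i = 0")
  case True
  then have "(\<Prod>i\<in>S. y i powr a i) = 0" using assms(1) by (auto intro: prod_zero)
  moreover have "(\<Sum>i\<in>S. a i * y i) \<ge> 0"
  proof (rule sum_nonneg)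
    fix i assume i: "i \<in> S"
    have "a i \<ge> 0" using assms(3)[OF i] by simp
    then show "0 \<le> a i * y i" using assms(5)[OF i] by simp
  qed
  ultimately show ?thesis by simp
next
  case False
  have "ln (\<Sum>i \<in> S. a i *\<^sub>R y i) \<ge> (\<Sum>i \<in> S. a i * ln (y i))"
  proof (intro concave_on_sum)
    show "concave_on {0<..} ln" by (simp add: ln_concave)
    show "\<And>i. i\<in>S \<Longrightarrow> y i \<in> {0<..}" using False assms by fastforce
  qed (use assms less_imp_le in auto)
  moreover have "(\<Sum>i \<in> S. a i *\<^sub>R y i) > 0"
    using False assms by (intro sum_pos) (auto simp: less_eq_real_def)
  ultimately have "(\<Sum>i \<in> S. a i *\<^sub>R y i) \<ge> exp (\<Sum>i \<in> S. a i * ln (y i))"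
    using ln_ge_iff by blast
  moreover have "exp (\<Sum>i \<in> S. a i * ln (y i)) = (\<Prod>i\<in>S. y i powr a i)"
    using False assms by (auto simp: exp_sum powr_def intro!: prod.cong simp: mult.commute)
  ultimately show ?thesis by simp
qed

lemma monom_abs_powr:
  fixes x :: "real ^ 'n::finite" and \<beta> :: "'j \<Rightarrow> ('n \<Rightarrow> nat)"
  assumes J: "finite J" and mu: "\<And>j. j \<in> J \<Longrightarrow> mu j > 0"
    and comb: "\<And>i. real (a i) = (\<Sum>j\<in>J. mu j * real (\<beta> j i))"
  shows "\<bar>monom x a\<bar> = (\<Prod>j\<in>J. \<bar>monom x (\<beta> j)\<bar> powr mu j)"
proof -
  have per: "\<bar>x $ i\<bar> ^ a i = (\<Prod>j\<in>J. (\<bar>x $ i\<bar> ^ \<beta> j i) powr mu j)" for i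
  proof (cases "x $ i = 0")
    case True
    show ?thesis
    proof (cases "a i = 0")
      case True
      then have "(\<Sum>j\<in>J. mu j * real (\<beta> j i)) = 0" using comb[of i] by simp
      moreover have nn: "\<And>j. j \<in> J \<Longrightarrow> 0 \<le> mu j * real (\<beta> j i)" using mu by (simp add: less_imp_le)
      ultimately have "\<forall>j\<in>J. mu j * real (\<beta> j i) = 0"
        using sum_nonneg_eq_0_iff[OF J nn] by simp
      then have "\<forall>j\<in>J. \<beta> j i = 0"
      proof (intro ballI)
        fix j assume "\<forall>j\<in>J. mu j * real (\<beta> j i) = 0" "j \<in> J"
        then have "mu j * real (\<beta> j i) = 0" "mu j > 0" using mu by auto
        then show "\<beta> j i = 0" by simp
      qed
      then show ?thesis using True by simp
    next
      case False
      then have "(\<Sum>j\<in>J. mu j * real (\<beta> j i)) \<noteq> 0" using comb[of i] by simp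
      then obtain j where j: "j \<in> J" "\<beta> j i \<noteq> 0" using sum.neutral[of J "\<lambda>j. mu j * real (\<beta> j i)"] by auto
      then have "(\<Prod>j\<in>J. (\<bar>x $ i\<bar> ^ \<beta> j i) powr mu j) = 0"
        using J \<open>x $ i = 0\<close> by (intro prod_zero) auto
      then show ?thesis using False \<open>x $ i = 0\<close> by simp
    qed
  next
    case False
    then have u: "\<bar>x $ i\<bar> > 0" by simp
    have "(\<Prod>j\<in>J. (\<bar>x $ i\<bar> ^ \<beta> j i) powr mu j) = (\<Prod>j\<in>J. \<bar>x $ i\<bar> powr (mu j * real (\<beta> j i)))"
      using u by (intro prod.cong) (auto simp: powr_realpow[symmetric] powr_powr mult.commute)
    also have "\<dots> = \<bar>x $ i\<bar> powr (\<Sum>j\<in>J. mu j * real (\<beta> j i))"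
      using u by (simp add: powr_sum)
    also have "\<dots> = \<bar>x $ i\<bar> ^ a i" using u comb[of i, symmetric] by (simp add: powr_realpow)
    finally show ?thesis by simp
  qed
  have "\<bar>monom x a\<bar> = (\<Prod>i\<in>UNIV. \<bar>x $ i\<bar> ^ a i)"
    by (simp add: monom_def abs_prod power_abs)
  also have "\<dots> = (\<Prod>i\<in>UNIV. \<Prod>j\<in>J. (\<bar>x $ i\<bar> ^ \<beta> j i) powr mu j)" using per by simp
  also have "\<dots> = (\<Prod>j\<in>J. \<Prod>i\<in>UNIV. (\<bar>x $ i\<bar> ^ \<beta> j i) powr mu j)" by (rule prod.swap)
  also have "\<dots> = (\<Prod>j\<in>J. \<bar>monom x (\<beta> j)\<bar> powr mu j)"
    by (simp add: monom_def abs_prod power_abs prod_powr_distrib)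
  finally show ?thesis .
qed


definition ax :: "'n \<Rightarrow> nat \<Rightarrow> ('n \<Rightarrow> nat)" where
  "ax i d = (\<lambda>j. if j = i then d else 0)"

lemma monom_ax: "monom x (ax i d) = (x $ i) ^ d"
proof -
  have "monom x (ax i d) = (\<Prod>l\<in>UNIV. (if l = i then (x $ i) ^ d else 1))"
    unfolding monom_def ax_def by (intro prod.cong) auto
  also have "\<dots> = (x $ i) ^ d" by simp
  finally show ?thesis .
qed

lemma emb_inj: "emb a = emb b \<Longrightarrow> a = b"
  by (auto simp: emb_def vec_eq_iff)

lemma monom_even_nonneg: "even_exp a \<Longrightarrow> monom x a \<ge> 0"
  unfolding monom_def even_exp_def by (intro prod_nonneg) (auto simp: zero_le_even_power)

lemma C3_ax: "C3 c \<longleftrightarrow> (\<forall>i. \<exists>k::nat. k \<ge> 1 \<and> ax i (2*k) \<in> Vf c)"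
  unfolding C3_def ax_def by simp

lemma coer_lemma:
  fixes f g :: "real ^ 'n::finite \<Rightarrow> real"
  assumes g: "filterlim g at_top at_infinity" and eps: "eps > 0"
    and T: "\<And>x. g x \<ge> T \<Longrightarrow> f x \<ge> eps * g x"
  shows "filterlim f at_top at_infinity"
  unfolding filterlim_at_top
proof
  fix Z :: real
  have "eventually (\<lambda>x. max T (Z / eps) \<le> g x) at_infinity"
    using g unfolding filterlim_at_top by blast
  then show "eventually (\<lambda>x. Z \<le> f x) at_infinity"
  proof (rule eventually_mono)
    fix x assume "max T (Z / eps) \<le> g x"
    then have "g x \<ge> T" "Z / eps \<le> g x" by auto
    then have "Z \<le> eps * g x" using eps by (simp add: field_simps)
    then show "Z \<le> f x" using T[OF \<open>g x \<ge> T\<close>] by simp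
  qed
qed

lemma powr_small:
  fixes K a s :: real
  assumes K: "K \<ge> 0" and a: "a > 0" and s: "0 \<le> s" "s < 1"
  shows "\<exists>T. \<forall>t\<ge>T. K * (t / a) powr s \<le> t / 2"
proof -
  define K' where "K' = K / a powr s"
  have K': "K' \<ge> 0" using K a by (simp add: K'_def)
  define T where "T = max 1 ((2 * K' + 1) powr (1 / (1 - s)))"
  have "K * (t / a) powr s \<le> t / 2" if t: "t \<ge> T" for t
  proof -
    have t1: "t \<ge> 1" using t by (simp add: T_def)
    have X: "((2 * K' + 1) powr (1 / (1 - s))) powr (1 - s) = 2 * K' + 1"
    proof -
      have "((2 * K' + 1) powr (1 / (1 - s))) powr (1 - s) = (2 * K' + 1) powr ((1 / (1 - s)) * (1 - s))" by (simp add: powr_powr)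
      also have "(1 / (1 - s)) * (1 - s) = 1" using s by simp
      also have "(2 * K' + 1) powr 1 = 2 * K' + 1" using K' by simp
      finally show ?thesis .
    qed
    have "((2 * K' + 1) powr (1 / (1 - s))) powr (1 - s) \<le> t powr (1 - s)"
      using t s by (intro powr_mono2) (auto simp: T_def)
    then have tp: "t powr (1 - s) \<ge> 2 * K' + 1" using X by simp
    have eq: "t = t powr s * t powr (1 - s)" using t1 by (simp add: powr_add[symmetric])
    have "K * (t / a) powr s = K' * t powr s"
      using a t1 by (simp add: K'_def powr_divide)
    also have "\<dots> \<le> t / 2"
    proof -
      have "2 * K' * t powr s \<le> t powr (1 - s) * t powr s"
        using tp by (intro mult_right_mono) auto
      moreover have "t powr (1 - s) * t powr s = t" using eq by (simp add: mult.commute)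
      ultimately have "2 * K' * t powr s \<le> t" by simp
      then show ?thesis using mult.assoc[of 2 K' "t powr s"] by linarith
    qed
    finally show ?thesis .
  qed
  then show ?thesis by blast
qed




locale circ =
  fixes c :: "('n::finite \<Rightarrow> nat) \<Rightarrow> real"
    and r :: nat
    and \<alpha> :: "nat \<Rightarrow> ('n \<Rightarrow> nat)"
    and astar :: "'n \<Rightarrow> nat"
    and lam :: "nat \<Rightarrow> real"
  assumes r_le: "r \<le> CARD('n)"
    and supp: "supp_poly c = \<alpha> ` {..r} \<union> {astar}"
    and inj: "inj_on \<alpha> {..r}"
    and astar_notin: "astar \<notin> \<alpha> ` {..r}"
    and even_vert: "\<forall>j\<le>r. even_exp (\<alpha> j)"
    and pos_vert: "\<forall>j\<le>r. c (\<alpha> j) > 0"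
    and aff_indep: "\<not> affine_dependent (emb ` \<alpha> ` {..r})"
    and lam_pos: "\<forall>j\<le>r. lam j > 0"
    and lam_sum: "(\<Sum>j\<le>r. lam j) = 1"
    and lam_comb: "(\<Sum>j\<le>r. lam j *\<^sub>R emb (\<alpha> j)) = emb astar"
begin

lemma comb_i: "real (astar i) = (\<Sum>j\<le>r. lam j * real (\<alpha> j i))"
proof -
  have "emb astar $ i = (\<Sum>j\<le>r. lam j *\<^sub>R emb (\<alpha> j)) $ i" using lam_comb by simp
  then show ?thesis by (simp add: emb_def)
qed

lemma c_astar: "c astar \<noteq> 0"
  using supp unfolding supp_poly_def by auto

lemma peval_eq: "peval c x = (\<Sum>j\<le>r. c (\<alpha> j) * monom x (\<alpha> j)) + c astar * monom x astar"
proof -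
  have "peval c x = (\<Sum>a\<in>\<alpha> ` {..r} \<union> {astar}. c a * monom x a)"
    unfolding peval_def supp ..
  also have "\<dots> = (\<Sum>a\<in>\<alpha> ` {..r}. c a * monom x a) + c astar * monom x astar"
    using astar_notin by (subst sum.union_disjoint) auto
  also have "(\<Sum>a\<in>\<alpha> ` {..r}. c a * monom x a) = (\<Sum>j\<le>r. c (\<alpha> j) * monom x (\<alpha> j))"
    using inj by (simp add: sum.reindex)
  finally show ?thesis .
qed

definition g where "g x = (\<Sum>j\<le>r. c (\<alpha> j) * monom x (\<alpha> j))"

lemma g_term_nonneg: "j \<le> r \<Longrightarrow> c (\<alpha> j) * monom x (\<alpha> j) \<ge> 0"
proof -
  assume j: "j \<le> r"
  have "monom x (\<alpha> j) \<ge> 0" using even_vert j monom_even_nonneg by blast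
  moreover have "c (\<alpha> j) \<ge> 0" using pos_vert j by (simp add: less_imp_le)
  ultimately show ?thesis by simp
qed

lemma g_nonneg: "g x \<ge> 0"
  unfolding g_def by (intro sum_nonneg g_term_nonneg) auto

lemma term_le_g: "j \<le> r \<Longrightarrow> c (\<alpha> j) * monom x (\<alpha> j) \<le> g x"
  unfolding g_def by (rule member_le_sum) (auto intro: g_term_nonneg)

definition cmin where "cmin = Min ((\<lambda>j. c (\<alpha> j)) ` {..r})"

lemma cmin_pos: "cmin > 0"
  unfolding cmin_def using pos_vert by (subst Min_gr_iff) auto

lemma cmin_le: "j \<le> r \<Longrightarrow> cmin \<le> c (\<alpha> j)"
  unfolding cmin_def by (rule Min_le) auto

lemma y_le: "j \<le> r \<Longrightarrow> \<bar>monom x (\<alpha> j)\<bar> \<le> g x / cmin"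
proof -
  assume j: "j \<le> r"
  have "cmin * \<bar>monom x (\<alpha> j)\<bar> \<le> c (\<alpha> j) * \<bar>monom x (\<alpha> j)\<bar>"
    using cmin_le[OF j] by (intro mult_right_mono) auto
  also have "\<dots> = c (\<alpha> j) * monom x (\<alpha> j)"
  proof -
    have "monom x (\<alpha> j) \<ge> 0" using even_vert j monom_even_nonneg by blast
    then show ?thesis by simp
  qed
  also have "\<dots> \<le> g x" by (rule term_le_g[OF j])
  finally show ?thesis using cmin_pos by (simp add: field_simps)
qed

lemma astar_not_extreme:
  "\<not> (emb astar extreme_point_of convex hull (emb ` (supp_poly c \<union> {\<lambda>_. 0})))"
proof
  let ?S = "convex hull (emb ` (supp_poly c \<union> {\<lambda>_. 0}))"
  assume "emb astar extreme_point_of ?S"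
  then have cv: "convex (?S - {emb astar})"
    by (simp add: extreme_point_of_stillconvex)
  have mem: "\<And>j. j \<in> {..r} \<Longrightarrow> emb (\<alpha> j) \<in> ?S - {emb astar}"
  proof -
    fix j assume j: "j \<in> {..r}"
    have "emb (\<alpha> j) \<in> emb ` (supp_poly c \<union> {\<lambda>_. 0})" using j supp by auto
    then have "emb (\<alpha> j) \<in> ?S" by (rule hull_inc)
    moreover have "emb (\<alpha> j) \<noteq> emb astar" using j astar_notin emb_inj by blast
    ultimately show "emb (\<alpha> j) \<in> ?S - {emb astar}" by simp
  qed
  have nn: "\<And>j. j \<in> {..r} \<Longrightarrow> 0 \<le> lam j" using lam_pos by (simp add: less_imp_le)
  have "(\<Sum>j\<in>{..r}. lam j *\<^sub>R emb (\<alpha> j)) \<in> ?S - {emb astar}"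
    by (rule convex_sum[OF finite_atMost cv lam_sum nn mem])
  then show False using lam_comb by simp
qed

lemma Vf_sub: "Vf c \<subseteq> \<alpha> ` {..r}"
proof
  fix a assume "a \<in> Vf c"
  then have a: "a \<in> supp_poly c \<union> {\<lambda>_. 0}" "a \<noteq> (\<lambda>_. 0)"
    "emb a extreme_point_of convex hull (emb ` (supp_poly c \<union> {\<lambda>_. 0}))"
    unfolding Vf_def V0_def by auto
  then have "a \<noteq> astar" using astar_not_extreme by auto
  then show "a \<in> \<alpha> ` {..r}" using a supp by auto
qed

lemma C1: "C1 c"
  unfolding C1_def using Vf_sub even_vert by auto

lemma C2: "C2 c"
  unfolding C2_def using Vf_sub pos_vert by auto

end



definition vt :: "'n::finite \<Rightarrow> real \<Rightarrow> real ^ 'n" where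
  "vt i t = (\<chi> l. if l = i then t else 0)"

lemma monom_vt: "monom (vt i t) a = (if (\<forall>l. l \<noteq> i \<longrightarrow> a l = 0) then t ^ a i else 0)"
proof (cases "\<forall>l. l \<noteq> i \<longrightarrow> a l = 0")
  case True
  have "monom (vt i t) a = (\<Prod>l\<in>UNIV. (if l = i then t ^ a i else 1))"
    unfolding monom_def vt_def using True by (intro prod.cong) auto
  then show ?thesis using True by simp
next
  case False
  then obtain l where l: "l \<noteq> i" "a l \<noteq> 0" by auto
  have "monom (vt i t) a = 0"
    unfolding monom_def using l by (intro prod_zero) (auto simp: vt_def intro!: bexI[of _ l])
  then show ?thesis by (simp only: if_not_P[OF False])
qed

lemma norm_vt: "norm (vt i t) \<ge> \<bar>t\<bar>"
  using component_le_norm_cart[of "vt i t" i] by (simp add: vt_def)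

context circ begin

lemma finite_supp: "finite (supp_poly c)"
  using supp by simp

lemma coercive_C3:
  assumes co: "coercive (peval c)"
  shows "C3 c"
  unfolding C3_ax
proof
  fix i
  define P where "P = {a \<in> supp_poly c. (\<forall>l. l \<noteq> i \<longrightarrow> a l = 0) \<and> a \<noteq> (\<lambda>_. 0)}"
  have finP: "finite P" using finite_supp by (simp add: P_def)
  show "\<exists>k. 1 \<le> k \<and> ax i (2 * k) \<in> Vf c"
  proof (cases "P = {}")
    case True
    define K where "K = (\<Sum>a\<in>supp_poly c. c a * (if a = (\<lambda>_. 0) then 1 else 0))"
    have const: "peval c (vt i t) = K" for t
      unfolding peval_def K_def
    proof (intro sum.cong refl)
      fix a assume a: "a \<in> supp_poly c"
      show "c a * monom (vt i t) a = c a * (if a = (\<lambda>_. 0) then 1 else 0)"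
      proof (cases "\<forall>l. l \<noteq> i \<longrightarrow> a l = 0")
        case True
        then have "a = (\<lambda>_. 0)" using \<open>P = {}\<close> a unfolding P_def by auto
        then show ?thesis by (simp add: monom_vt)
      next
        case False
        then have "a \<noteq> (\<lambda>_. 0)" by auto
        have "monom (vt i t) a = 0" unfolding monom_vt using False by (rule if_not_P)
        then show ?thesis using \<open>a \<noteq> (\<lambda>_. 0)\<close> by simp
      qed
    qed
    have "eventually (\<lambda>x. K + 1 \<le> peval c x) at_infinity"
      using co unfolding coercive_def filterlim_at_top by blast
    then obtain b where b: "\<And>x. b \<le> norm x \<Longrightarrow> K + 1 \<le> peval c x"
      unfolding eventually_at_infinity by blast
    have "b \<le> norm (vt i \<bar>b\<bar>)" using norm_vt[where i=i and t="\<bar>b\<bar>"] by simp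
    then have "K + 1 \<le> K" using b const by metis
    then show ?thesis by simp
  next
    case False
    define m where "m = Max ((\<lambda>a. a i) ` P)"
    have "m \<in> (\<lambda>a. a i) ` P" unfolding m_def using finP False by (intro Max_in) auto
    then obtain am where am: "am \<in> P" "am i = m" by auto
    have amax: "\<And>a. a \<in> P \<Longrightarrow> a i \<le> am i" unfolding am(2) m_def using finP by (intro Max_ge) auto
    have am_pure: "\<And>l. l \<noteq> i \<Longrightarrow> am l = 0" and am_nz: "am \<noteq> (\<lambda>_. 0)" and am_supp: "am \<in> supp_poly c"
      using am(1) unfolding P_def by auto
    have ami: "am i \<noteq> 0"
    proof
      assume "am i = 0"
      then have "am = (\<lambda>_. 0)" using am_pure by (intro ext) (metis)
      then show False using am_nz by simp
    qed
    have am_ne: "am \<noteq> astar"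
    proof
      assume eq: "am = astar"
      have apure: "\<And>j l. j \<le> r \<Longrightarrow> l \<noteq> i \<Longrightarrow> \<alpha> j l = 0"
      proof -
        fix j l assume j: "j \<le> r" and l: "l \<noteq> i"
        have "(\<Sum>j\<le>r. lam j * real (\<alpha> j l)) = 0" using comb_i[of l] am_pure[OF l] eq by simp
        moreover have nn: "\<And>j. j \<in> {..r} \<Longrightarrow> 0 \<le> lam j * real (\<alpha> j l)" using lam_pos by (simp add: less_imp_le)
        ultimately have "\<forall>j\<in>{..r}. lam j * real (\<alpha> j l) = 0"
          using sum_nonneg_eq_0_iff[OF finite_atMost nn] by simp
        then show "\<alpha> j l = 0" using j lam_pos by force
      qed
      have "\<exists>j\<le>r. \<alpha> j i > astar i"
      proof (rule ccontr)
        assume "\<not> ?thesis"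
        then have le: "\<forall>j\<in>{..r}. real (\<alpha> j i) \<le> real (astar i)" by auto
        have "(\<Sum>j\<le>r. lam j * (real (astar i) - real (\<alpha> j i))) = real (astar i) * (\<Sum>j\<le>r. lam j) - (\<Sum>j\<le>r. lam j * real (\<alpha> j i))"
          by (simp add: algebra_simps sum_subtractf sum_distrib_left)
        also have "\<dots> = 0" using lam_sum comb_i[of i] by simp
        finally have s0: "(\<Sum>j\<le>r. lam j * (real (astar i) - real (\<alpha> j i))) = 0" .
        have nn: "\<And>j. j \<in> {..r} \<Longrightarrow> 0 \<le> lam j * (real (astar i) - real (\<alpha> j i))"
          using lam_pos le by (simp add: less_imp_le)
        have "\<forall>j\<in>{..r}. lam j * (real (astar i) - real (\<alpha> j i)) = 0"
          using sum_nonneg_eq_0_iff[OF finite_atMost nn] s0 by simp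
        then have "\<alpha> 0 i = astar i" using lam_pos by force
        moreover have "\<And>l. l \<noteq> i \<Longrightarrow> \<alpha> 0 l = astar l" using apure eq am_pure by simp
        ultimately have "\<alpha> 0 = astar" by (metis ext)
        then show False using astar_notin by auto
      qed
      then obtain j where j: "j \<le> r" "\<alpha> j i > astar i" by auto
      have "\<alpha> j \<in> P" unfolding P_def using j apure supp by (auto dest: fun_cong[of _ _ i])
      then have "\<alpha> j i \<le> am i" by (rule amax)
      then show False using j eq by simp
    qed
    then obtain j where j: "j \<le> r" "am = \<alpha> j" using am_supp supp by auto
    have "even (am i)" using even_vert j unfolding even_exp_def by auto
    then obtain k where k: "am i = 2 * k" by (auto elim: evenE)
    have k1: "k \<ge> 1" using k ami by simp
    have amax_eq: "am = ax i (2 * k)" unfolding ax_def using am_pure k by (intro ext) auto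
    define T where "T = emb ` (supp_poly c \<union> {\<lambda>_. 0})"
    define S where "S = T - {emb am}"
    define M where "M = real (\<Sum>a\<in>supp_poly c. a i) + 1"
    have Mpos: "M > 0" unfolding M_def using of_nat_0_le_iff[of "\<Sum>a\<in>supp_poly c. a i"] by linarith
    define w :: "real ^ 'n" where "w = (\<chi> l. if l = i then 1 else - M)"
    have inner_emb: "w \<bullet> emb u = real (u i) + (\<Sum>l\<in>UNIV - {i}. - M * real (u l))" for u
    proof -
      have "w \<bullet> emb u = (\<Sum>l\<in>UNIV. w $ l * real (u l))" by (simp add: inner_vec_def emb_def)
      also have "\<dots> = w $ i * real (u i) + (\<Sum>l\<in>UNIV - {i}. w $ l * real (u l))"
        by (simp add: sum.remove)
      also have "(\<Sum>l\<in>UNIV - {i}. w $ l * real (u l)) = (\<Sum>l\<in>UNIV - {i}. - M * real (u l))"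
        by (intro sum.cong) (auto simp: w_def)
      finally show ?thesis by (simp add: w_def)
    qed
    have wam: "w \<bullet> emb am = real (am i)"
      using inner_emb[of am] am_pure by simp
    have Sb: "S \<subseteq> {y. w \<bullet> y < real (am i)}"
    proof
      fix y assume "y \<in> S"
      then obtain u where u: "u \<in> supp_poly c \<union> {\<lambda>_. 0}" "y = emb u" "u \<noteq> am"
        unfolding S_def T_def by auto
      have uM: "real (u i) < M"
      proof (cases "u \<in> supp_poly c")
        case True
        have "u i \<le> (\<Sum>a\<in>supp_poly c. a i)" using True finite_supp by (intro member_le_sum) auto
        then show ?thesis unfolding M_def by linarith
      next
        case False then have "u = (\<lambda>_. 0)" using u by auto
        then show ?thesis using Mpos by simp
      qed
      show "y \<in> {y. w \<bullet> y < real (am i)}"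
      proof (cases "\<forall>l. l \<noteq> i \<longrightarrow> u l = 0")
        case True
        then have wy: "w \<bullet> y = real (u i)" using inner_emb[of u] u(2) by simp
        show ?thesis
        proof (cases "u = (\<lambda>_. 0)")
          case True then show ?thesis using wy ami by simp
        next
          case False
          then have "u \<in> P" using u \<open>\<forall>l. l \<noteq> i \<longrightarrow> u l = 0\<close> unfolding P_def by auto
          then have "u i \<le> am i" by (rule amax)
          moreover have "u i \<noteq> am i"
          proof
            assume "u i = am i"
            then have "u = am" using True am_pure by (intro ext) metis
            then show False using u by simp
          qed
          ultimately show ?thesis using wy by simp
        qed
      next
        case False
        then obtain l0 where l0: "l0 \<noteq> i" "u l0 \<noteq> 0" by auto
        have "(\<Sum>l\<in>UNIV - {i}. - M * real (u l)) = - M * real (u l0) + (\<Sum>l\<in>UNIV - {i} - {l0}. - M * real (u l))"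
          using l0 by (subst sum.remove[of _ l0]) auto
        also have "(\<Sum>l\<in>UNIV - {i} - {l0}. - M * real (u l)) \<le> 0"
          using Mpos by (intro sum_nonpos) (simp add: mult_nonneg_nonneg)
        also have "- M * real (u l0) \<le> - M" using l0 Mpos by simp
        finally have "(\<Sum>l\<in>UNIV - {i}. - M * real (u l)) \<le> - M" by simp
        then have "w \<bullet> y < 0" using inner_emb[of u] u(2) uM by simp
        then show ?thesis using ami by simp
      qed
    qed
    have "convex hull S \<subseteq> {y. w \<bullet> y < real (am i)}"
      by (rule hull_minimal[where S=convex, OF Sb convex_halfspace_lt])
    then have notin: "emb am \<notin> convex hull S" using wam by auto
    have finS: "finite S" unfolding S_def T_def using finite_supp by simp
    have "emb am extreme_point_of convex hull (insert (emb am) S)"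
      by (rule extreme_point_of_convex_hull_insert[OF finS notin])
    moreover have "insert (emb am) S = T" unfolding S_def T_def using am_supp by auto
    ultimately have "am \<in> V0 c" unfolding V0_def T_def using am_supp by auto
    then have "am \<in> Vf c" unfolding Vf_def using am_nz by auto
    then show ?thesis using amax_eq k1 by auto
  qed
qed

lemma C3_choice:
  assumes "C3 c"
  obtains kk J where "\<And>i. kk i \<ge> 1" "\<And>i. J i \<le> r" "\<And>i. \<alpha> (J i) = ax i (2 * kk i)"
proof -
  have "\<forall>i. \<exists>k. k \<ge> 1 \<and> (\<exists>j. j \<le> r \<and> \<alpha> j = ax i (2 * k))"
  proof
    fix i
    from assms obtain k where k: "k \<ge> 1" "ax i (2 * k) \<in> Vf c" unfolding C3_ax by blast
    then have "ax i (2 * k) \<in> \<alpha> ` {..r}" using Vf_sub by blast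
    then obtain j where "j \<le> r" "ax i (2 * k) = \<alpha> j" by auto
    then show "\<exists>k. k \<ge> 1 \<and> (\<exists>j. j \<le> r \<and> \<alpha> j = ax i (2 * k))" using k(1) by metis
  qed
  from choice[OF this] obtain kk where kk: "\<forall>i. kk i \<ge> 1 \<and> (\<exists>j. j \<le> r \<and> \<alpha> j = ax i (2 * kk i))" by blast
  then have "\<forall>i. \<exists>j. j \<le> r \<and> \<alpha> j = ax i (2 * kk i)" by blast
  from choice[OF this] obtain J where J: "\<forall>i. J i \<le> r \<and> \<alpha> (J i) = ax i (2 * kk i)" by blast
  show ?thesis by (rule that[of kk J]) (use kk J in auto)
qed

lemma ax_inj: "ax i d = ax i' d' \<Longrightarrow> d \<noteq> 0 \<Longrightarrow> i = i'"
  unfolding ax_def by (metis)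

lemma J_inj:
  assumes "\<And>i. kk i \<ge> 1" "\<And>i. J i \<le> r" "\<And>i. \<alpha> (J i) = ax i (2 * kk i)"
  shows "inj J"
proof
  fix i i' assume "J i = J i'"
  then have e: "ax i (2 * kk i) = ax i' (2 * kk i')" using assms(3) by metis
  have n: "2 * kk i \<noteq> 0" using assms(1)[of i] by simp
  show "i = i'" by (rule ax_inj[OF e n])
qed

lemma C3_card:
  assumes "C3 c"
  shows "CARD('n) \<le> r + 1"
proof -
  obtain kk J where kk: "\<And>i. kk i \<ge> 1" "\<And>i. J i \<le> r" "\<And>i. \<alpha> (J i) = ax i (2 * kk i)"
    using C3_choice[OF assms] by blast
  have "inj J" by (rule J_inj[OF kk])
  then have "card (UNIV :: 'n set) \<le> card {..r}"
    using kk(2) by (intro card_inj_on_le) (auto simp: inj_on_def)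
  then show ?thesis by simp
qed

end



lemma pow_ge: "k \<ge> 1 \<Longrightarrow> (y::real) ^ (2 * k) \<ge> \<bar>y\<bar> - 1"
proof (cases "\<bar>y\<bar> \<ge> 1")
  case True
  assume k: "k \<ge> 1"
  have "\<bar>y\<bar> = \<bar>y\<bar> ^ 1" by simp
  also have "\<dots> \<le> \<bar>y\<bar> ^ (2 * k)" using True k by (intro power_increasing) auto
  also have "\<dots> = y ^ (2 * k)" by (simp add: power_even_abs)
  finally show ?thesis by simp
next
  case False
  have "y ^ (2 * k) \<ge> 0" by (simp add: zero_le_even_power)
  then show ?thesis using False by linarith
qed

context circ begin

lemma g_tends:
  assumes "C3 c"
  shows "filterlim g at_top at_infinity"
proof -
  obtain kk J where kk: "\<And>i. kk i \<ge> 1" "\<And>i. J i \<le> r" "\<And>i. \<alpha> (J i) = ax i (2 * kk i)"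
    using C3_choice[OF assms] by blast
  have injJ: "inj J" by (rule J_inj[OF kk])
  have lower: "g x \<ge> cmin * (norm x - real CARD('n))" for x
  proof -
    have "(\<Sum>j\<in>J ` UNIV. c (\<alpha> j) * monom x (\<alpha> j)) \<le> g x"
      unfolding g_def using kk(2) by (intro sum_mono2) (auto intro: g_term_nonneg)
    also have "(\<Sum>j\<in>J ` UNIV. c (\<alpha> j) * monom x (\<alpha> j)) = (\<Sum>i\<in>UNIV. c (\<alpha> (J i)) * (x $ i) ^ (2 * kk i))"
      using injJ by (simp add: sum.reindex kk(3) monom_ax)
    finally have A: "(\<Sum>i\<in>UNIV. c (\<alpha> (J i)) * (x $ i) ^ (2 * kk i)) \<le> g x" .
    have "(\<Sum>i\<in>UNIV. cmin * (\<bar>x $ i\<bar> - 1)) \<le> (\<Sum>i\<in>UNIV. c (\<alpha> (J i)) * (x $ i) ^ (2 * kk i))"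
    proof (intro sum_mono)
      fix i :: 'n
      have "cmin * (\<bar>x $ i\<bar> - 1) \<le> cmin * (x $ i) ^ (2 * kk i)"
        using cmin_pos pow_ge[OF kk(1)[of i]] by (intro mult_left_mono) auto
      also have "\<dots> \<le> c (\<alpha> (J i)) * (x $ i) ^ (2 * kk i)"
        using cmin_le[OF kk(2)[of i]] by (intro mult_right_mono) (auto simp: zero_le_even_power)
      finally show "cmin * (\<bar>x $ i\<bar> - 1) \<le> c (\<alpha> (J i)) * (x $ i) ^ (2 * kk i)" .
    qed
    moreover have "(\<Sum>i\<in>UNIV. cmin * (\<bar>x $ i\<bar> - 1)) = cmin * ((\<Sum>i\<in>UNIV. \<bar>x $ i\<bar>) - real CARD('n))"
      by (simp add: sum_distrib_left[symmetric] sum_subtractf)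
    moreover have "cmin * (norm x - real CARD('n)) \<le> cmin * ((\<Sum>i\<in>UNIV. \<bar>x $ i\<bar>) - real CARD('n))"
      using cmin_pos norm_le_l1_cart[of x] by (intro mult_left_mono) auto
    ultimately show ?thesis using A by linarith
  qed
  show ?thesis
    unfolding filterlim_at_top
  proof
    fix Z :: real
    have "eventually (\<lambda>x::real^'n. Z / cmin + real CARD('n) \<le> norm x) at_infinity"
      unfolding eventually_at_infinity by blast
    then show "eventually (\<lambda>x::real^'n. Z \<le> g x) at_infinity"
    proof (rule eventually_mono)
      fix x :: "real^'n" assume "Z / cmin + real CARD('n) \<le> norm x"
      then have "Z / cmin \<le> norm x - real CARD('n)" by simp
      then have "Z \<le> cmin * (norm x - real CARD('n))" using cmin_pos by (simp add: field_simps)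
      then show "Z \<le> g x" using lower[of x] by simp
    qed
  qed
qed

definition Theta where "Theta = (\<Prod>j\<le>r. (c (\<alpha> j) / lam j) powr (lam j))"

lemma Theta_pos: "Theta > 0"
  unfolding Theta_def
proof (intro prod_pos)
  fix j assume "j \<in> {..r}"
  then have "c (\<alpha> j) > 0" "lam j > 0" using pos_vert lam_pos by auto
  then show "0 < (c (\<alpha> j) / lam j) powr lam j" by simp
qed

lemma abs_mstar: "\<bar>monom x astar\<bar> = (\<Prod>j\<le>r. \<bar>monom x (\<alpha> j)\<bar> powr lam j)"
  by (rule monom_abs_powr) (use lam_pos comb_i in auto)

lemma Theta_prod: "Theta * \<bar>monom x astar\<bar> = (\<Prod>j\<le>r. (c (\<alpha> j) / lam j * \<bar>monom x (\<alpha> j)\<bar>) powr lam j)"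
proof -
  have "Theta * \<bar>monom x astar\<bar> = (\<Prod>j\<le>r. (c (\<alpha> j) / lam j) powr lam j * \<bar>monom x (\<alpha> j)\<bar> powr lam j)"
    unfolding Theta_def abs_mstar by (simp only: prod.distrib)
  also have "\<dots> = (\<Prod>j\<le>r. (c (\<alpha> j) / lam j * \<bar>monom x (\<alpha> j)\<bar>) powr lam j)"
    by (simp only: powr_mult[symmetric])
  finally show ?thesis .
qed

lemma Theta_bound: "Theta * \<bar>monom x astar\<bar> \<le> g x"
proof -
  have "Theta * \<bar>monom x astar\<bar> = (\<Prod>j\<le>r. (c (\<alpha> j) / lam j * \<bar>monom x (\<alpha> j)\<bar>) powr lam j)"
    by (rule Theta_prod)
  also have "\<dots> \<le> (\<Sum>j\<le>r. lam j * (c (\<alpha> j) / lam j * \<bar>monom x (\<alpha> j)\<bar>))"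
  proof (rule wamgm)
    fix j assume j: "j \<in> {..r}"
    then have "c (\<alpha> j) > 0" "lam j > 0" using pos_vert lam_pos by auto
    then show "0 \<le> c (\<alpha> j) / lam j * \<bar>monom x (\<alpha> j)\<bar>" by simp
  qed (use lam_pos lam_sum in auto)
  also have "\<dots> = g x"
    unfolding g_def
  proof (intro sum.cong refl)
    fix j assume j: "j \<in> {..r}"
    have "monom x (\<alpha> j) \<ge> 0" using even_vert j monom_even_nonneg by auto
    moreover have "lam j > 0" using lam_pos j by simp
    ultimately show "lam j * (c (\<alpha> j) / lam j * \<bar>monom x (\<alpha> j)\<bar>) = c (\<alpha> j) * monom x (\<alpha> j)"
      by simp
  qed
  finally show ?thesis .
qed

lemma suff_b:
  assumes C3: "C3 c"
    and cond: "if even_exp astar then c astar > - Theta else \<bar>c astar\<bar> < Theta"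
  shows "coercive (peval c)"
  unfolding coercive_def
proof (cases "even_exp astar \<and> c astar \<ge> 0")
  case True
  have "peval c x \<ge> 1 * g x" for x
  proof -
    have "monom x astar \<ge> 0" using True monom_even_nonneg by auto
    then show ?thesis using True peval_eq[of x] unfolding g_def by simp
  qed
  then show "filterlim (peval c) at_top at_infinity"
    by (intro coer_lemma[OF g_tends[OF C3], of 1]) auto
next
  case False
  have lt: "\<bar>c astar\<bar> < Theta" using cond False by (auto split: if_splits)
  define eps where "eps = 1 - \<bar>c astar\<bar> / Theta"
  have eps: "eps > 0" using lt Theta_pos by (simp add: eps_def field_simps)
  have "peval c x \<ge> eps * g x" for x
  proof -
    have "\<bar>c astar\<bar> * \<bar>monom x astar\<bar> = (\<bar>c astar\<bar> / Theta) * (Theta * \<bar>monom x astar\<bar>)"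
      using Theta_pos by simp
    also have "\<dots> \<le> (\<bar>c astar\<bar> / Theta) * g x"
      using Theta_bound Theta_pos by (intro mult_left_mono) auto
    finally have "\<bar>c astar\<bar> * \<bar>monom x astar\<bar> \<le> (\<bar>c astar\<bar> / Theta) * g x" .
    moreover have "c astar * monom x astar \<ge> - (\<bar>c astar\<bar> * \<bar>monom x astar\<bar>)"
      by (metis abs_ge_minus_self abs_mult minus_le_iff)
    ultimately show ?thesis using peval_eq[of x] unfolding g_def eps_def by (simp add: algebra_simps)
  qed
  then show "filterlim (peval c) at_top at_infinity"
    by (intro coer_lemma[OF g_tends[OF C3] eps]) auto
qed

end



context circ begin

lemma bary0: "r = CARD('n) \<Longrightarrow> \<exists>nu. (\<Sum>j\<le>r. nu j) = 1 \<and> (\<forall>i. (\<Sum>j\<le>r. nu j * real (\<alpha> j i)) = 0)"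
proof -
  assume r: "r = CARD('n)"
  define E where "E = emb ` \<alpha> ` {..r}"
  have injE: "inj_on (emb \<circ> \<alpha>) {..r}"
    using inj emb_inj by (auto simp: inj_on_def)
  have cardE: "card E = r + 1"
    unfolding E_def image_comp using card_image[OF injE] by simp
  have "aff_dim E = int (r + 1) - 1"
    using aff_dim_affine_independent[OF aff_indep] cardE unfolding E_def by simp
  then have "aff_dim E = int DIM(real ^ 'n)" using r by simp
  then have "affine hull E = UNIV" using aff_dim_eq_full by blast
  then have "0 \<in> affine hull E" by simp
  then obtain u where u: "sum u E = 1" "(\<Sum>v\<in>E. u v *\<^sub>R v) = 0"
    using affine_hull_finite[of E] unfolding E_def by auto
  define nu where "nu j = u (emb (\<alpha> j))" for j
  have "sum u E = (\<Sum>j\<le>r. nu j)"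
    unfolding E_def image_comp nu_def using sum.reindex[OF injE, of u] by (simp add: o_def)
  moreover have "(\<Sum>v\<in>E. u v *\<^sub>R v) = (\<Sum>j\<le>r. nu j *\<^sub>R emb (\<alpha> j))"
    unfolding E_def image_comp nu_def using sum.reindex[OF injE, of "\<lambda>v. u v *\<^sub>R v"] by (simp add: o_def)
  ultimately have s1: "(\<Sum>j\<le>r. nu j) = 1" and s2: "(\<Sum>j\<le>r. nu j *\<^sub>R emb (\<alpha> j)) = 0"
    using u by auto
  have "(\<Sum>j\<le>r. nu j * real (\<alpha> j i)) = 0" for i
  proof -
    have "(\<Sum>j\<le>r. nu j *\<^sub>R emb (\<alpha> j)) $ i = 0" using s2 by simp
    then show ?thesis by (simp add: emb_def)
  qed
  then show ?thesis using s1 by blast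
qed

lemma suff_a:
  assumes r: "r = CARD('n)" and C3: "C3 c"
  shows "coercive (peval c)"
proof -
  obtain nu where nu: "(\<Sum>j\<le>r. nu j) = 1" "\<And>i. (\<Sum>j\<le>r. nu j * real (\<alpha> j i)) = 0"
    using bary0[OF r] by blast
  define lmin where "lmin = Min (lam ` {..r})"
  have lmin_pos: "lmin > 0" unfolding lmin_def using lam_pos by (subst Min_gr_iff) auto
  have lmin_le: "j \<le> r \<Longrightarrow> lmin \<le> lam j" for j unfolding lmin_def by (rule Min_le) auto
  have lam_le1: "lam 0 \<le> 1"
    using lam_sum member_le_sum[of 0 "{..r}" lam] lam_pos by (simp add: less_imp_le)
  define N where "N = 1 + (\<Sum>j\<le>r. \<bar>nu j\<bar>)"
  have Npos: "N \<ge> 1" unfolding N_def by (simp add: sum_nonneg)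
  define t where "t = lmin / (2 * N)"
  have tpos: "t > 0" unfolding t_def using lmin_pos Npos by simp
  have tle: "t \<le> 1 / 2"
  proof -
    have "lmin \<le> 1" using lmin_le[of 0] lam_le1 by simp
    then have "lmin / (2 * N) \<le> 1 / (2 * N)" using Npos by (simp add: divide_right_mono)
    also have "\<dots> \<le> 1 / 2" using Npos by (simp add: field_simps)
    finally show ?thesis unfolding t_def .
  qed
  define mu where "mu j = lam j - t * nu j" for j
  have mu_pos: "mu j > 0" if j: "j \<le> r" for j
  proof -
    have "\<bar>nu j\<bar> \<le> (\<Sum>j\<le>r. \<bar>nu j\<bar>)" using j by (intro member_le_sum) auto
    then have "\<bar>nu j\<bar> \<le> N" unfolding N_def by simp
    then have "t * \<bar>nu j\<bar> \<le> t * N" using tpos by (intro mult_left_mono) auto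
    also have "t * N = lmin / 2" unfolding t_def using Npos by simp
    finally have "t * nu j \<le> lmin / 2" using tpos
      by (smt (verit) abs_ge_self mult_left_mono)
    then show ?thesis unfolding mu_def using lmin_le[OF j] lmin_pos by simp
  qed
  define s where "s = 1 - t"
  have s: "0 \<le> s" "s < 1" using tpos tle by (auto simp: s_def)
  have mu_sum: "(\<Sum>j\<le>r. mu j) = s"
    unfolding mu_def s_def using lam_sum nu(1) by (simp add: sum_subtractf sum_distrib_left[symmetric])
  have mu_comb: "real (astar i) = (\<Sum>j\<le>r. mu j * real (\<alpha> j i))" for i
  proof -
    have "(\<Sum>j\<le>r. mu j * real (\<alpha> j i)) = (\<Sum>j\<le>r. lam j * real (\<alpha> j i)) - t * (\<Sum>j\<le>r. nu j * real (\<alpha> j i))"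
      unfolding mu_def by (simp add: algebra_simps sum_subtractf sum_distrib_left)
    then show ?thesis using comb_i[of i] nu(2)[of i] by simp
  qed
  have mbound: "\<bar>monom x astar\<bar> \<le> (g x / cmin) powr s" for x
  proof -
    define B where "B = g x / cmin"
    have B0: "B \<ge> 0" unfolding B_def using g_nonneg cmin_pos by simp
    have "\<bar>monom x astar\<bar> = (\<Prod>j\<le>r. \<bar>monom x (\<alpha> j)\<bar> powr mu j)"
      by (rule monom_abs_powr) (use mu_pos mu_comb in auto)
    also have "\<dots> \<le> (\<Prod>j\<le>r. B powr mu j)"
    proof (intro prod_mono conjI)
      fix j assume j: "j \<in> {..r}"
      show "0 \<le> \<bar>monom x (\<alpha> j)\<bar> powr mu j" by simp
      show "\<bar>monom x (\<alpha> j)\<bar> powr mu j \<le> B powr mu j"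
        using j mu_pos y_le unfolding B_def by (intro powr_mono2) (auto simp: less_imp_le)
    qed
    also have "\<dots> = B powr s"
    proof (cases "B = 0")
      case True
      have "(\<Prod>j\<le>r. B powr mu j) = 0" using True by (intro prod_zero) (auto intro: bexI[of _ 0])
      then show ?thesis using True by simp
    next
      case False
      have "B powr (\<Sum>j\<le>r. mu j) = (\<Prod>j\<le>r. B powr mu j)" by (rule powr_sum[OF False])
      then show ?thesis using mu_sum by simp
    qed
    finally show ?thesis unfolding B_def .
  qed
  obtain T where T: "\<And>y. y \<ge> T \<Longrightarrow> \<bar>c astar\<bar> * (y / cmin) powr s \<le> y / 2"
    using powr_small[OF abs_ge_zero cmin_pos s] by blast
  have "peval c x \<ge> (1/2) * g x" if "g x \<ge> T" for x
  proof -
    have "\<bar>c astar\<bar> * \<bar>monom x astar\<bar> \<le> \<bar>c astar\<bar> * (g x / cmin) powr s"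
      using mbound by (intro mult_left_mono) auto
    also have "\<dots> \<le> g x / 2" using T[OF that] .
    finally have "\<bar>c astar\<bar> * \<bar>monom x astar\<bar> \<le> g x / 2" .
    moreover have "c astar * monom x astar \<ge> - (\<bar>c astar\<bar> * \<bar>monom x astar\<bar>)"
      by (metis abs_ge_minus_self abs_mult minus_le_iff)
    ultimately show ?thesis using peval_eq[of x] unfolding g_def by simp
  qed
  then show ?thesis unfolding coercive_def
    by (intro coer_lemma[OF g_tends[OF C3], of "1/2"]) auto
qed

end



context circ begin


lemma nec_b:
  assumes co: "coercive (peval c)" and r: "r + 1 = CARD('n)" and C3: "C3 c"
  shows "if even_exp astar then c astar > - Theta else \<bar>c astar\<bar> < Theta"
proof (rule ccontr)
  assume ncond: "\<not> ?thesis"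
  obtain kk J where kk: "\<And>i. kk i \<ge> 1" "\<And>i. J i \<le> r" "\<And>i. \<alpha> (J i) = ax i (2 * kk i)"
    using C3_choice[OF C3] by blast
  have injJ: "inj J" by (rule J_inj[OF kk])
  have JU: "J ` UNIV = {..r}"
  proof (rule card_subset_eq)
    show "J ` UNIV \<subseteq> {..r}" using kk(2) by auto
    show "card (J ` UNIV) = card {..r}" using card_image[OF injJ] r by simp
  qed simp
  have "eventually (\<lambda>x. 1 \<le> peval c x) at_infinity"
    using co unfolding coercive_def filterlim_at_top by blast
  then obtain b where b: "\<And>x. b \<le> norm x \<Longrightarrow> 1 \<le> peval c x"
    unfolding eventually_at_infinity by blast
  obtain i0 where i0: "\<not> even_exp astar \<Longrightarrow> odd (astar i0)"
    unfolding even_exp_def by blast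
  define \<sigma> :: real where "\<sigma> = (if even_exp astar then 1 else if c astar > 0 then -1 else 1)"
  have \<sigma>2: "\<sigma> = 1 \<or> \<sigma> = -1" unfolding \<sigma>_def by auto
  have cs: "c astar * \<sigma> \<le> - Theta"
  proof (cases "even_exp astar")
    case True
    then show ?thesis using ncond unfolding \<sigma>_def by simp
  next
    case False
    then have "\<bar>c astar\<bar> \<ge> Theta" using ncond by simp
    then show ?thesis using False unfolding \<sigma>_def by (auto split: if_splits)
  qed
  define s :: "'n \<Rightarrow> real" where "s i = (if i = i0 then \<sigma> else 1)" for i
  have s2: "s i = 1 \<or> s i = -1" for i unfolding s_def using \<sigma>2 by auto
  define B where "B = max b 1"
  have Bpos: "B > 0" unfolding B_def by simp
  define \<tau> where "\<tau> = c (\<alpha> (J i0)) / lam (J i0) * B ^ (2 * kk i0)"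
  have \<tau>pos: "\<tau> > 0" unfolding \<tau>_def using pos_vert lam_pos kk(2)[of i0] Bpos by simp
  define q where "q i = lam (J i) * \<tau> / c (\<alpha> (J i))" for i
  have qpos: "q i > 0" for i unfolding q_def using pos_vert lam_pos kk(2)[of i] \<tau>pos by simp
  define p where "p i = q i powr (1 / real (2 * kk i))" for i
  have p0: "p i \<ge> 0" for i unfolding p_def by simp
  define x :: "real ^ 'n" where "x = (\<chi> i. s i * p i)"
  have xpow: "(x $ i) ^ (2 * kk i) = q i" for i
  proof -
    have "(s i) ^ (2 * kk i) = 1" using s2[of i] by (auto simp: power_mult)
    moreover have "(p i) ^ (2 * kk i) = q i"
    proof -
      have "(p i) ^ (2 * kk i) = q i powr (real (2 * kk i) * (1 / real (2 * kk i)))"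
        unfolding p_def using qpos[of i] by (simp add: powr_power)
      also have "real (2 * kk i) * (1 / real (2 * kk i)) = 1" using kk(1)[of i] by simp
      finally show ?thesis using qpos[of i] by simp
    qed
    ultimately show ?thesis unfolding x_def by (simp add: power_mult_distrib)
  qed
  have mon: "monom x (\<alpha> j) = lam j * \<tau> / c (\<alpha> j)" if j: "j \<le> r" for j
  proof -
    obtain i where i: "j = J i" using JU j by auto
    show ?thesis unfolding i kk(3) monom_ax xpow q_def ..
  qed
  have trm: "c (\<alpha> j) * monom x (\<alpha> j) = lam j * \<tau>" if "j \<le> r" for j
  proof -
    have "c (\<alpha> j) > 0" using pos_vert that by simp
    then show ?thesis using mon[OF that] by simp
  qed
  have gx: "g x = \<tau>"
    unfolding g_def using trm lam_sum by (simp add: sum_distrib_right[symmetric])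
  have "Theta * \<bar>monom x astar\<bar> = (\<Prod>j\<le>r. \<tau> powr lam j)"
    unfolding Theta_prod
  proof (intro prod.cong refl)
    fix j assume j: "j \<in> {..r}"
    have cp: "c (\<alpha> j) > 0" "lam j > 0" using j pos_vert lam_pos by auto
    have "\<bar>monom x (\<alpha> j)\<bar> = lam j * \<tau> / c (\<alpha> j)" using mon[of j] j cp \<tau>pos by simp
    then have "c (\<alpha> j) / lam j * \<bar>monom x (\<alpha> j)\<bar> = \<tau>"
      using cp by (simp add: field_simps)
    then show "(c (\<alpha> j) / lam j * \<bar>monom x (\<alpha> j)\<bar>) powr lam j = \<tau> powr lam j" by simp
  qed
  also have "\<dots> = \<tau> powr (\<Sum>j\<le>r. lam j)" using \<tau>pos by (intro powr_sum[symmetric]) simp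
  also have "\<dots> = \<tau>" using \<tau>pos lam_sum by simp
  finally have Tm: "Theta * \<bar>monom x astar\<bar> = \<tau>" .
  have sign: "monom x astar = \<sigma> * \<bar>monom x astar\<bar>"
  proof -
    have "monom x astar = (\<Prod>i\<in>UNIV. s i ^ astar i) * (\<Prod>i\<in>UNIV. p i ^ astar i)"
      unfolding monom_def x_def by (simp add: power_mult_distrib prod.distrib)
    moreover have "\<bar>monom x astar\<bar> = (\<Prod>i\<in>UNIV. p i ^ astar i)"
      unfolding monom_def x_def abs_prod
    proof (intro prod.cong refl)
      fix i
      have "\<bar>s i\<bar> = 1" using s2[of i] by auto
      then show "\<bar>((\<chi> i. s i * p i) $ i) ^ astar i\<bar> = p i ^ astar i"
        using p0[of i] by (simp add: power_abs abs_mult)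
    qed
    moreover have "(\<Prod>i\<in>UNIV. s i ^ astar i) = \<sigma>"
    proof (cases "even_exp astar")
      case True
      then show ?thesis unfolding s_def \<sigma>_def by simp
    next
      case False
      have "(\<Prod>i\<in>UNIV. s i ^ astar i) = (\<Prod>i\<in>UNIV. if i = i0 then \<sigma> ^ astar i0 else 1)"
        unfolding s_def by (intro prod.cong) auto
      also have "\<dots> = \<sigma> ^ astar i0" by simp
      also have "\<dots> = \<sigma>" using \<sigma>2 i0[OF False] by auto
      finally show ?thesis .
    qed
    ultimately show ?thesis by simp
  qed
  have "peval c x = \<tau> + c astar * \<sigma> * \<bar>monom x astar\<bar>"
    using peval_eq[of x] gx sign unfolding g_def by simp
  also have "c astar * \<sigma> * \<bar>monom x astar\<bar> \<le> - Theta * \<bar>monom x astar\<bar>"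
    using cs by (intro mult_right_mono) auto
  also have "- Theta * \<bar>monom x astar\<bar> = - \<tau>" using Tm by simp
  finally have neg: "peval c x \<le> 0" by simp
  have "\<bar>x $ i0\<bar> = p i0" unfolding x_def using s2[of i0] p0[of i0] by auto
  also have "p i0 = B"
  proof -
    have cp: "c (\<alpha> (J i0)) > 0" "lam (J i0) > 0" using pos_vert lam_pos kk(2)[of i0] by auto
    have "q i0 = B ^ (2 * kk i0)" unfolding q_def \<tau>_def using cp by (simp add: field_simps)
    also have "\<dots> = B powr real (2 * kk i0)" by (rule powr_realpow[OF Bpos, symmetric])
    finally have "p i0 = B powr (real (2 * kk i0) * (1 / real (2 * kk i0)))"
      unfolding p_def by (simp add: powr_powr)
    also have "real (2 * kk i0) * (1 / real (2 * kk i0)) = 1" using kk(1)[of i0] by simp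
    finally show ?thesis using Bpos by simp
  qed
  finally have "B \<le> norm x" using component_le_norm_cart[of x i0] by simp
  then have "b \<le> norm x" unfolding B_def by simp
  then have "1 \<le> peval c x" by (rule b)
  then show False using neg by simp
qed

end

theorem mainTheorem4:
  fixes c :: "('n::finite \<Rightarrow> nat) \<Rightarrow> real"
    and r :: nat
    and \<alpha> :: "nat \<Rightarrow> ('n \<Rightarrow> nat)"
    and astar :: "'n \<Rightarrow> nat"
    and lam :: "nat \<Rightarrow> real"
  assumes r_le: "r \<le> CARD('n)"
    and supp: "supp_poly c = \<alpha> ` {..r} \<union> {astar}"
    and inj: "inj_on \<alpha> {..r}"
    and astar_notin: "astar \<notin> \<alpha> ` {..r}"
    and even_vert: "\<forall>j\<le>r. even_exp (\<alpha> j)"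
    and pos_vert: "\<forall>j\<le>r. c (\<alpha> j) > 0"
    and vertices: "{v. v extreme_point_of convex hull (emb ` supp_poly c)} = emb ` \<alpha> ` {..r}"
    and aff_indep: "\<not> affine_dependent (emb ` \<alpha> ` {..r})"
    and lam_pos: "\<forall>j\<le>r. lam j > 0"
    and lam_sum: "(\<Sum>j\<le>r. lam j) = 1"
    and lam_comb: "(\<Sum>j\<le>r. lam j *\<^sub>R emb (\<alpha> j)) = emb astar"
  shows "coercive (peval c) \<longleftrightarrow>
    ((r = CARD('n) \<and> C1 c \<and> C2 c \<and> C3 c) \<or>
     (r = CARD('n) - 1 \<and> C1 c \<and> C2 c \<and> C3 c \<and>
        (let \<Theta> = (\<Prod>j\<le>r. (c (\<alpha> j) / lam j) powr (lam j)) in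
          (if even_exp astar then c astar > - \<Theta> else \<bar>c astar\<bar> < \<Theta>))))"
proof -
  interpret circ c r \<alpha> astar lam
    by unfold_locales (use assms in auto)
  have L: "(let \<Theta> = (\<Prod>j\<le>r. (c (\<alpha> j) / lam j) powr (lam j)) in
          (if even_exp astar then c astar > - \<Theta> else \<bar>c astar\<bar> < \<Theta>))
        \<longleftrightarrow> (if even_exp astar then c astar > - Theta else \<bar>c astar\<bar> < Theta)"
    by (simp add: Let_def Theta_def)
  show ?thesis
  proof
    assume co: "coercive (peval c)"
    have C3: "C3 c" by (rule coercive_C3[OF co])
    have "CARD('n) \<le> r + 1" by (rule C3_card[OF C3])
    then consider "r = CARD('n)" | "r + 1 = CARD('n)" using r_le by linarith
    then show "(r = CARD('n) \<and> C1 c \<and> C2 c \<and> C3 c) \<or>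
     (r = CARD('n) - 1 \<and> C1 c \<and> C2 c \<and> C3 c \<and>
        (let \<Theta> = (\<Prod>j\<le>r. (c (\<alpha> j) / lam j) powr (lam j)) in
          (if even_exp astar then c astar > - \<Theta> else \<bar>c astar\<bar> < \<Theta>)))"
    proof cases
      case 1 then show ?thesis using C1 C2 C3 by simp
    next
      case 2
      have "if even_exp astar then c astar > - Theta else \<bar>c astar\<bar> < Theta"
        by (rule nec_b[OF co 2 C3])
      then show ?thesis using C1 C2 C3 2 L by auto
    qed
  next
    assume "(r = CARD('n) \<and> C1 c \<and> C2 c \<and> C3 c) \<or>
     (r = CARD('n) - 1 \<and> C1 c \<and> C2 c \<and> C3 c \<and>
        (let \<Theta> = (\<Prod>j\<le>r. (c (\<alpha> j) / lam j) powr (lam j)) in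
          (if even_exp astar then c astar > - \<Theta> else \<bar>c astar\<bar> < \<Theta>)))"
    then show "coercive (peval c)"
    proof
      assume "r = CARD('n) \<and> C1 c \<and> C2 c \<and> C3 c"
      then show ?thesis using suff_a by blast
    next
      assume h: "r = CARD('n) - 1 \<and> C1 c \<and> C2 c \<and> C3 c \<and>
        (let \<Theta> = (\<Prod>j\<le>r. (c (\<alpha> j) / lam j) powr (lam j)) in
          (if even_exp astar then c astar > - \<Theta> else \<bar>c astar\<bar> < \<Theta>))"
      then have "if even_exp astar then c astar > - Theta else \<bar>c astar\<bar> < Theta" using L by blast
      then show ?thesis using suff_b h by blast
    qed
  qed
qed


end
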